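(* For every $k\in\mathbb{N}$ and every $\alpha\in(0,1)$ there exists $\gamma_0>0$ such that for all $0<\gamma\leq\gamma_0$ the following holds. Let $G$ be a digraph on $n$ vertices and let $G_1,\dots,G_k$ be pairwise edge-disjoint subgraphs of $G$ with $\sum_{i\in[k]}e(G_i)\leq\gamma n^2$ and $\Delta^0(G_i)\leq\alpha n$ for each $i\in[k]$. Then each $G_i$ contains a path system $\mathcal{Q}_i$ such that $\bigcup_{i\in[k]}\mathcal{Q}_i$ contains no directed cycle and $e(\mathcal{Q}_i)\geq\lfloor e(G_i)/(\alpha n)\rfloor$ for all $i\in[k]$.
   Context: A path system in a digraph is a set of vertex-disjoint directed paths, identified with the subgraph formed by their vertices and edges; $e(\mathcal{Q})$ is its number of edges. $\Delta^0(H)$ is the maximum over vertices of the maximum of in- and outdegree in $H$. (The paper states the hypothesis as "$0<\gamma\ll\alpha<1$" with $k$ fixed beforehand, i.e. $\gamma$ sufficiently small in terms of $\alpha$ and $k$.) *)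

theory Defs
  imports Main "HOL-Library.Library"
begin

definition digraph :: "'a set \<Rightarrow> ('a \<times> 'a) set \<Rightarrow> bool" where
  "digraph V E \<longleftrightarrow> finite V \<and> E \<subseteq> V \<times> V \<and> (\<forall>v. (v, v) \<notin> E)"

definition outdeg :: "('a \<times> 'a) set \<Rightarrow> 'a \<Rightarrow> nat" where
  "outdeg E v = card {u. (v, u) \<in> E}"

definition indeg :: "('a \<times> 'a) set \<Rightarrow> 'a \<Rightarrow> nat" where
  "indeg E v = card {u. (u, v) \<in> E}"

text \<open>A path system, identified with its edge set: a finite set of edges forming
  vertex-disjoint directed paths, i.e. every vertex has in- and outdegree at most one
  and there is no directed cycle.\<close>
definition path_system :: "('a \<times> 'a) set \<Rightarrow> bool" where
  "path_system Q \<longleftrightarrow> finite Q \<and> acyclic Q \<and>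
     (\<forall>v u w. (v, u) \<in> Q \<and> (v, w) \<in> Q \<longrightarrow> u = w) \<and>
     (\<forall>v u w. (u, v) \<in> Q \<and> (w, v) \<in> Q \<longrightarrow> u = w)"

end

theory Submission
  imports Defs
begin


lemma acyclic_insert_fresh:
  assumes "acyclic r" "u \<noteq> v" "u \<notin> Field r \<or> v \<notin> Field r"
  shows "acyclic (insert (u,v) r)"
proof -
  have "(v,u) \<notin> r\<^sup>*"
  proof
    assume "(v,u) \<in> r\<^sup>*"
    then have "(v,u) \<in> r\<^sup>+" using assms(2) rtranclD[of v u r] by auto
    then have "v \<in> Domain r" "u \<in> Range r"
      by (auto dest: tranclD tranclD2)
    then show False using assms(3) by (auto simp: Field_def)
  qed
  then show ?thesis using assms(1) by (simp add: acyclic_insert)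
qed

lemma sdr_aux:
  assumes "finite J" "J \<subseteq> I" "\<forall>x\<in>I. finite (C x) \<and> card I \<le> card (C x)" "finite I"
  shows "\<exists>f. inj_on f J \<and> (\<forall>x\<in>J. f x \<in> C x)"
  using assms(1,2)
proof (induct J rule: finite_induct)
  case empty then show ?case by auto
next
  case (insert a J)
  then obtain f where f: "inj_on f J" "\<forall>x\<in>J. f x \<in> C x" by auto
  have "card (f ` J) \<le> card J" by (rule card_image_le) (use insert in auto)
  also have "card J < card (insert a J)" using insert by simp
  also have "\<dots> \<le> card I" using insert assms(4) by (intro card_mono) auto
  also have "\<dots> \<le> card (C a)" using assms(3) insert by auto
  finally have "\<not> C a \<subseteq> f ` J"
    using assms(3) insert by (meson card_mono finite_imageI not_le)
  then obtain y where y: "y \<in> C a" "y \<notin> f ` J" by auto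
  have "inj_on (f(a := y)) (insert a J)"
    using f(1) y(2) insert(2) unfolding inj_on_def by (auto split: if_splits) 
  moreover have "\<forall>x\<in>insert a J. (f(a := y)) x \<in> C x" using f(2) y(1) insert(2) by auto
  ultimately show ?case by blast
qed

lemma sdr:
  assumes "finite I" "\<forall>x\<in>I. finite (C x) \<and> card I \<le> card (C x)"
  shows "\<exists>f. inj_on f I \<and> (\<forall>x\<in>I. f x \<in> C x)"
  using sdr_aux[OF assms(1) order_refl assms(2) assms(1)] .

lemma acyc_pendant:
  fixes ed :: "'r \<Rightarrow> 'a \<times> 'a"
  assumes "finite W" "acyclic L" "inj_on p W"
    "\<forall>r\<in>W. ed r = (p r, q r) \<or> ed r = (q r, p r)"
    "\<forall>r\<in>W. p r \<noteq> q r" "\<forall>r\<in>W. p r \<notin> Field L" "\<forall>r\<in>W. p r \<notin> q ` W"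
  shows "acyclic (L \<union> ed ` W)"
proof -
  have "acyclic (L \<union> ed ` V)" if "V \<subseteq> W" for V
  proof -
    have "finite V" using that assms(1) finite_subset by auto
    then show ?thesis using that
    proof (induct V rule: finite_induct)
      case empty then show ?case using assms(2) by simp
    next
      case (insert a V)
      have aW: "a \<in> W" using insert by auto
      have nf: "p a \<notin> Field (L \<union> ed ` V)"
      proof
        assume "p a \<in> Field (L \<union> ed ` V)"
        then obtain r where r: "r \<in> V" "p a = fst (ed r) \<or> p a = snd (ed r)"
          using assms(6) aW by (auto simp: Field_def Domain_fst Range_snd)
        have rW: "r \<in> W" using r insert by auto
        have "r \<noteq> a" using r insert by auto
        then have "p a \<noteq> p r" using inj_on_contraD[OF assms(3) _ aW rW] by metis
        moreover have "p a \<noteq> q r" using assms(7) aW rW by auto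
        ultimately show False using r(2) assms(4) rW by auto
      qed
      have eq: "L \<union> ed ` insert a V = insert (ed a) (L \<union> ed ` V)" by auto
      have ac: "acyclic (L \<union> ed ` V)" using insert by auto
      have "p a \<noteq> q a" using assms(5) aW by auto
      then have "acyclic (insert (p a, q a) (L \<union> ed ` V))" "acyclic (insert (q a, p a) (L \<union> ed ` V))"
        using acyclic_insert_fresh[OF ac] nf by auto
      then show ?case unfolding eq using assms(4) aW by auto
    qed
  qed
  then show ?thesis by simp
qed



definition ouniq :: "('a \<times> 'a) set \<Rightarrow> bool" where
  "ouniq Q \<longleftrightarrow> (\<forall>v u w. (v, u) \<in> Q \<and> (v, w) \<in> Q \<longrightarrow> u = w)"
definition iuniq :: "('a \<times> 'a) set \<Rightarrow> bool" where
  "iuniq Q \<longleftrightarrow> (\<forall>v u w. (u, v) \<in> Q \<and> (w, v) \<in> Q \<longrightarrow> u = w)"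

lemma card_out_block:
  assumes "finite L" "finite X" "\<And>u. card {v. (u,v) \<in> L} \<le> M"
  shows "card (Sigma X (\<lambda>u. {v. (u,v) \<in> L})) \<le> card X * M"
proof -
  have fin: "\<forall>u\<in>X. finite {v. (u,v) \<in> L}"
  proof
    fix u have "{v. (u,v) \<in> L} \<subseteq> snd ` L" by force
    then show "finite {v. (u,v) \<in> L}" using assms(1) finite_subset by blast
  qed
  have "card (Sigma X (\<lambda>u. {v. (u,v) \<in> L})) = (\<Sum>u\<in>X. card {v. (u,v) \<in> L})"
    using card_SigmaI[OF assms(2) fin] .
  also have "\<dots> \<le> card X * M" using sum_bounded_above[of X "\<lambda>u. card {v. (u,v) \<in> L}" M] assms(3) by simp
  finally show ?thesis .
qed

lemma card_in_block:
  fixes L :: "('a \<times> 'a) set"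
  assumes "finite L" "finite X" "\<And>v. card {u. (u,v) \<in> L} \<le> M"
  shows "card {(u,v). (u,v) \<in> L \<and> v \<in> X} \<le> card X * M"
proof -
  have "{(u,v). (u,v) \<in> L \<and> v \<in> X} \<subseteq> (\<lambda>(v,u). (u,v)) ` Sigma X (\<lambda>v. {u. (v,u) \<in> converse L})"
    by force
  moreover have "card ((\<lambda>(v,u). (u,v)) ` Sigma X (\<lambda>v. {u. (v,u) \<in> converse L})) \<le> card X * M"
  proof -
    have fs: "finite (Sigma X (\<lambda>v. {u. (v,u) \<in> converse L}))"
    proof -
      have "Sigma X (\<lambda>v. {u. (v,u) \<in> converse L}) \<subseteq> converse L" by auto
      then show ?thesis using assms(1) finite_subset by blast
    qed
    have "card ((\<lambda>(v,u). (u,v)) ` Sigma X (\<lambda>v. {u. (v,u) \<in> converse L}))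
        \<le> card (Sigma X (\<lambda>v. {u. (v,u) \<in> converse L}))" by (rule card_image_le[OF fs])
    also have "\<dots> \<le> card X * M"
      by (rule card_out_block) (use assms in auto)
    finally show ?thesis .
  qed
  moreover have "finite ((\<lambda>(v,u). (u,v)) ` Sigma X (\<lambda>v. {u. (v,u) \<in> converse L}))"
  proof -
    have "(\<lambda>(v,u). (u,v)) ` Sigma X (\<lambda>v. {u. (v,u) \<in> converse L}) \<subseteq> L" by auto
    then show ?thesis using assms(1) finite_subset by blast
  qed
  ultimately show ?thesis by (meson card_mono le_trans)
qed

lemma card_Field_le: "finite r \<Longrightarrow> card (Field r) \<le> 2 * card r"
proof -
  assume f: "finite r"
  have "card (Field r) \<le> card (Domain r) + card (Range r)"
    unfolding Field_def by (rule card_Un_le)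
  also have "card (Domain r) \<le> card r" unfolding Domain_fst using card_image_le[OF f] by blast
  also have "card (Range r) \<le> card r" unfolding Range_snd using card_image_le[OF f] by blast
  finally show ?thesis by simp
qed

lemma nat_ineq_aux:
  fixes c k K :: nat
  assumes "1 \<le> K"
  shows "(c + c + 2*(k*(c+1))) * (K - 1) < (c+1)*((2*k+2)*K)"
proof -
  obtain K' where K: "K = Suc K'" using assms by (cases K) auto
  have "c + c + 2*(k*(c+1)) \<le> (c+1)*(2*k+2)" by (simp add: algebra_simps)
  then have "(c + c + 2*(k*(c+1))) * K' \<le> ((c+1)*(2*k+2))*K'" by (rule mult_le_mono1)
  also have "\<dots> < ((c+1)*(2*k+2))*Suc K'" by simp
  finally show ?thesis using K by (simp only: mult.assoc diff_Suc_1)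
qed

lemma light_step:
  fixes Lt P :: "nat \<Rightarrow> ('a \<times> 'a) set"
  assumes finL: "finite (Lt i)"
    and outd: "\<And>u. card {v. (u,v) \<in> Lt i} \<le> K - 1"
    and ind: "\<And>v. card {u. (u,v) \<in> Lt i} \<le> K - 1"
    and K1: "1 \<le> K"
    and big: "(card (P i) + 1) * ((2*k+2)*K) \<le> card (Lt i)"
    and sub: "P i \<subseteq> Lt i"
    and finP: "\<forall>j<k. finite (P j)"
    and bal: "\<forall>j<k. card (P j) \<le> card (P i) + 1"
    and ik: "i < k"
  shows "\<exists>u v. (u,v) \<in> Lt i \<and> u \<notin> Domain (P i) \<and> v \<notin> Range (P i) \<and>
           (u \<notin> Field (\<Union>j<k. P j) \<or> v \<notin> Field (\<Union>j<k. P j))"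
proof (rule ccontr)
  assume neg: "\<not> ?thesis"
  define c where "c = card (P i)"
  define U where "U = (\<Union>j<k. P j)"
  define F where "F = Field U"
  have finU: "finite U" unfolding U_def using finP by auto
  have cU: "card U \<le> k * (c+1)"
  proof -
    have "card U \<le> (\<Sum>j<k. card (P j))" unfolding U_def by (rule card_UN_le) simp
    also have "\<dots> \<le> card {..<k} * (c+1)"
      using sum_bounded_above[of "{..<k}" "\<lambda>j. card (P j)" "c+1"] bal unfolding c_def by auto
    finally show ?thesis by simp
  qed
  have cF: "card F \<le> 2 * (k * (c+1))" unfolding F_def using card_Field_le[OF finU] cU by linarith
  have finF: "finite F" unfolding F_def using finU by (simp add: finite_Field)
  have finPi: "finite (P i)" using finP ik by auto
  have cD: "card (Domain (P i)) \<le> c" unfolding c_def Domain_fst using card_image_le[OF finPi] by blast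
  have cR: "card (Range (P i)) \<le> c" unfolding c_def Range_snd using card_image_le[OF finPi] by blast
  have finD: "finite (Domain (P i))" "finite (Range (P i))" using finPi
    by (auto simp: Domain_fst Range_snd)
  have cover: "Lt i \<subseteq> Sigma (Domain (P i)) (\<lambda>u. {v. (u,v) \<in> Lt i})
        \<union> {(u,v). (u,v) \<in> Lt i \<and> v \<in> Range (P i)} \<union> Sigma F (\<lambda>u. {v. (u,v) \<in> Lt i})"
    using neg unfolding F_def U_def by blast
  have "card (Lt i) \<le> card (Sigma (Domain (P i)) (\<lambda>u. {v. (u,v) \<in> Lt i})
        \<union> {(u,v). (u,v) \<in> Lt i \<and> v \<in> Range (P i)} \<union> Sigma F (\<lambda>u. {v. (u,v) \<in> Lt i}))"
  proof (rule card_mono[OF _ cover])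
    have "Sigma (Domain (P i)) (\<lambda>u. {v. (u,v) \<in> Lt i}) \<subseteq> Lt i" by auto
    moreover have "Sigma F (\<lambda>u. {v. (u,v) \<in> Lt i}) \<subseteq> Lt i" by auto
    moreover have "{(u,v). (u,v) \<in> Lt i \<and> v \<in> Range (P i)} \<subseteq> Lt i" by auto
    ultimately show "finite (Sigma (Domain (P i)) (\<lambda>u. {v. (u,v) \<in> Lt i})
        \<union> {(u,v). (u,v) \<in> Lt i \<and> v \<in> Range (P i)} \<union> Sigma F (\<lambda>u. {v. (u,v) \<in> Lt i}))"
      using finL by (meson finite_UnI finite_subset)
  qed
  also have "\<dots> \<le> card (Sigma (Domain (P i)) (\<lambda>u. {v. (u,v) \<in> Lt i}))
        + card {(u,v). (u,v) \<in> Lt i \<and> v \<in> Range (P i)} + card (Sigma F (\<lambda>u. {v. (u,v) \<in> Lt i}))"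
    by (meson add_mono_thms_linordered_semiring(3) card_Un_le order_trans)
  also have "\<dots> \<le> card (Domain (P i)) * (K-1) + card (Range (P i)) * (K-1) + card F * (K-1)"
    using card_out_block[OF finL finD(1) outd] card_in_block[OF finL finD(2) ind]
      card_out_block[OF finL finF outd] by linarith
  also have "\<dots> = (card (Domain (P i)) + card (Range (P i)) + card F) * (K-1)"
    by (simp only: distrib_right)
  also have "\<dots> \<le> (c + c + 2*(k*(c+1))) * (K - 1)"
    by (rule mult_le_mono1) (use cD cR cF in linarith)
  also have "\<dots> < (c+1)*((2*k+2)*K)" using nat_ineq_aux[OF K1] .
  finally show False using big unfolding c_def by linarith
qed



lemma light_phase:
  fixes Lt :: "nat \<Rightarrow> ('a \<times> 'a) set" and s :: "nat \<Rightarrow> nat"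
  assumes finL: "\<forall>i<k. finite (Lt i)"
    and loopl: "\<forall>i<k. \<forall>u v. (u,v) \<in> Lt i \<longrightarrow> u \<noteq> v"
    and outd: "\<forall>i<k. \<forall>u. card {v. (u,v) \<in> Lt i} \<le> K - 1"
    and ind: "\<forall>i<k. \<forall>v. card {u. (u,v) \<in> Lt i} \<le> K - 1"
    and K1: "1 \<le> K"
    and big: "\<forall>i<k. s i * ((2*k+2)*K) \<le> card (Lt i)"
  shows "\<exists>P. (\<forall>i<k. P i \<subseteq> Lt i \<and> card (P i) = s i \<and> ouniq (P i) \<and> iuniq (P i))
             \<and> acyclic (\<Union>i<k. P i)"
proof -
  define inv where "inv P \<longleftrightarrow> (\<forall>i<k. P i \<subseteq> Lt i \<and> card (P i) \<le> s i \<and> ouniq (P i) \<and> iuniq (P i))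
      \<and> acyclic (\<Union>i<k. P i)
      \<and> (\<forall>i<k. \<forall>j<k. card (P i) < s i \<longrightarrow> card (P j) \<le> card (P i) + 1)" for P :: "nat \<Rightarrow> ('a \<times> 'a) set"
  define mu where "mu P = (\<Sum>i<k. s i - card (P i))" for P :: "nat \<Rightarrow> ('a \<times> 'a) set"
  have main: "\<forall>P. inv P \<longrightarrow> mu P = m \<longrightarrow>
     (\<exists>P. (\<forall>i<k. P i \<subseteq> Lt i \<and> card (P i) = s i \<and> ouniq (P i) \<and> iuniq (P i))
             \<and> acyclic (\<Union>i<k. P i))" for m
  proof (induct m rule: less_induct)
    case (less m)
    show ?case
    proof (intro allI impI)
      fix P assume iP: "inv P" and mP: "mu P = m"
      show "\<exists>P. (\<forall>i<k. P i \<subseteq> Lt i \<and> card (P i) = s i \<and> ouniq (P i) \<and> iuniq (P i))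
             \<and> acyclic (\<Union>i<k. P i)"
      proof (cases "\<forall>i<k. card (P i) = s i")
        case True then show ?thesis using iP unfolding inv_def by blast
      next
        case False
        then obtain i0 where "i0 < k" "card (P i0) < s i0" using iP unfolding inv_def
          by (meson le_neq_implies_less)
        then obtain i where i: "i < k" "card (P i) < s i"
          and imin: "\<forall>j. j < k \<and> card (P j) < s j \<longrightarrow> card (P i) \<le> card (P j)"
          using ex_has_least_nat[of "\<lambda>j. j < k \<and> card (P j) < s j" i0 "\<lambda>j. card (P j)"] by blast
        have subi: "P i \<subseteq> Lt i" using iP i unfolding inv_def by blast
        have finP: "\<forall>j<k. finite (P j)" using iP finL unfolding inv_def by (meson finite_subset)
        have bal: "\<forall>j<k. card (P j) \<le> card (P i) + 1" using iP i unfolding inv_def by blast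
        have bigi: "(card (P i) + 1) * ((2*k+2)*K) \<le> card (Lt i)"
          using big i mult_le_mono1[of "card (P i) + 1" "s i" "(2*k+2)*K"] by force
        obtain u v where uv: "(u,v) \<in> Lt i" "u \<notin> Domain (P i)" "v \<notin> Range (P i)"
          "u \<notin> Field (\<Union>j<k. P j) \<or> v \<notin> Field (\<Union>j<k. P j)"
          using light_step[of Lt i K P k, OF _ _ _ K1 bigi subi finP bal i(1)] finL outd ind i(1)
          by blast
        define P' where "P' = P(i := insert (u,v) (P i))"
        have uvn: "(u,v) \<notin> P i" using uv(2) by auto
        have cP': "card (P' i) = card (P i) + 1"
          unfolding P'_def using uvn finP i(1) by simp
        have U': "(\<Union>j<k. P' j) = insert (u,v) (\<Union>j<k. P j)"
          unfolding P'_def using i(1) by (auto split: if_splits)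
        have ne: "u \<noteq> v" using loopl uv(1) i(1) by blast
        have acP: "acyclic (\<Union>j<k. P j)" using iP unfolding inv_def by blast
        have acP': "acyclic (\<Union>j<k. P' j)" unfolding U'
          by (rule acyclic_insert_fresh[OF acP ne uv(4)])
        have oP': "ouniq (P' i)" "iuniq (P' i)"
          using iP i uv(2,3) unfolding inv_def P'_def ouniq_def iuniq_def
          by (auto simp: Domain_iff Range_iff)
        have inv': "inv P'"
          unfolding inv_def
        proof (intro conjI allI impI)
          fix j assume j: "j < k"
          show "P' j \<subseteq> Lt j" using iP j uv(1) unfolding inv_def P'_def by auto
          show "card (P' j) \<le> s j" using iP j cP' i(2) unfolding inv_def by (auto simp: P'_def)
          show "ouniq (P' j)" using iP j oP' unfolding inv_def by (cases "j = i") (auto simp: P'_def)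
          show "iuniq (P' j)" using iP j oP' unfolding inv_def by (cases "j = i") (auto simp: P'_def)
        next
          show "acyclic (\<Union>j<k. P' j)" by (rule acP')
        next
          fix i' j assume i': "i' < k" and j: "j < k" and lt: "card (P' i') < s i'"
          show "card (P' j) \<le> card (P' i') + 1"
          proof (cases "i' = i")
            case True
            then show ?thesis using bal j cP' by (cases "j = i") (auto simp: P'_def)
          next
            case False
            then have lt': "card (P i') < s i'" using lt by (simp add: P'_def)
            then have "card (P i) \<le> card (P i')" using imin i' by blast
            then show ?thesis using iP i' j lt' False cP' unfolding inv_def
              by (cases "j = i") (auto simp: P'_def)
          qed
        qed
        have "mu P' < mu P" unfolding mu_def
        proof (rule sum_strict_mono_ex1)
          show "\<forall>x\<in>{..<k}. s x - card (P' x) \<le> s x - card (P x)"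
            using cP' by (auto simp: P'_def)
          show "\<exists>a\<in>{..<k}. s a - card (P' a) < s a - card (P a)"
            using cP' i by (intro bexI[of _ i]) auto
        qed simp
        then show ?thesis using less mP inv' by blast
      qed
    qed
  qed
  have "inv (\<lambda>_. {})" unfolding inv_def ouniq_def iuniq_def by (auto simp: acyclic_def)
  then show ?thesis using main by blast
qed



lemma choose_AB:
  fixes A B :: "'a set" and t :: nat
  assumes "finite A" "finite B"
  shows "\<exists>X Y. X \<subseteq> A \<and> Y \<subseteq> B \<and> card X + card Y \<le> t \<and> (card X + card Y = t \<or> (X = A \<and> Y = B))"
proof (cases "t \<le> card A")
  case True
  then obtain X where "X \<subseteq> A" "card X = t" by (meson obtain_subset_with_card_n)
  then show ?thesis by (intro exI[of _ X] exI[of _ "{}"]) auto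
next
  case False
  show ?thesis
  proof (cases "t - card A \<le> card B")
    case True
    then obtain Y where "Y \<subseteq> B" "card Y = t - card A" by (meson obtain_subset_with_card_n)
    then show ?thesis using False by (intro exI[of _ A] exI[of _ Y]) auto
  next
    case False2: False
    then show ?thesis using False by (intro exI[of _ A] exI[of _ B]) auto
  qed
qed



lemma core:
  fixes k n :: nat and \<alpha> \<gamma> :: real and E :: "(nat \<times> nat) set" and Gs :: "nat \<Rightarrow> (nat \<times> nat) set"
  assumes a0: "0 < \<alpha>" and g0: "0 < \<gamma>" and gsmall: "\<gamma> \<le> \<alpha>^2 / (6 * (real k + 1))"
    and dg: "digraph {..<n} E" and subE: "\<forall>i<k. Gs i \<subseteq> E"
    and sumb: "(\<Sum>i<k. real (card (Gs i))) \<le> \<gamma> * real n ^ 2"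
    and degb: "\<forall>i<k. \<forall>v. real (outdeg (Gs i) v) \<le> \<alpha> * real n \<and> real (indeg (Gs i) v) \<le> \<alpha> * real n"
  shows "\<exists>Qs. (\<forall>i<k. Qs i \<subseteq> Gs i \<and> path_system (Qs i)) \<and> acyclic (\<Union>i<k. Qs i) \<and>
            (\<forall>i<k. of_int (floor (real (card (Gs i)) / (\<alpha> * real n))) \<le> real (card (Qs i)))"
proof -
  define D where "D = \<alpha> * real n"
  define t where "t i = nat (floor (real (card (Gs i)) / D))" for i
  have D0: "0 \<le> D" unfolding D_def using a0 by simp
  have tfl: "real (t i) = of_int (floor (real (card (Gs i)) / D))" for i
  proof -
    have "0 \<le> real (card (Gs i)) / D" using D0 by simp
    then show ?thesis unfolding t_def by simp
  qed
  have finE: "finite E" and Eb: "\<And>u v. (u,v) \<in> E \<Longrightarrow> u < n \<and> v < n \<and> u \<noteq> v"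
    using dg unfolding digraph_def
    by (auto intro: finite_subset[of E "{..<n} \<times> {..<n}"])
  have finG: "\<And>i. i < k \<Longrightarrow> finite (Gs i)" using subE finE finite_subset by blast
  have tD: "real (t i) * D \<le> real (card (Gs i))" for i
  proof (cases "D = 0")
    case True then show ?thesis by simp
  next
    case False
    then have Dp: "0 < D" using D0 by simp
    have "real (t i) \<le> real (card (Gs i)) / D" unfolding tfl by simp
    then show ?thesis using Dp by (simp add: pos_le_divide_eq)
  qed
  define T where "T = (\<Sum>i<k. t i)"
  show ?thesis
  proof (cases "T = 0")
    case True
    then have t0: "\<And>i. i < k \<Longrightarrow> t i = 0" unfolding T_def by simp
    show ?thesis
    proof (intro exI[of _ "\<lambda>_. {}"] conjI allI impI)
      fix i assume i: "i < k"
      show "{} \<subseteq> Gs i" by simp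
      show "path_system {}" by (simp add: path_system_def acyclic_def)
      show "of_int (floor (real (card (Gs i)) / (\<alpha> * real n))) \<le> real (card ({}::(nat\<times>nat) set))"
        using t0[OF i] tfl[of i] unfolding D_def by simp
    qed (simp add: acyclic_def)
  next
    case False
    have n0: "0 < n"
    proof (rule ccontr)
      assume "\<not> 0 < n"
      then have "E = {}" using Eb by fastforce
      then have "\<And>i. i < k \<Longrightarrow> t i = 0" using subE unfolding t_def by auto
      then have "T = 0" unfolding T_def by simp
      then show False using False by simp
    qed
    have Dpos: "0 < D" unfolding D_def using a0 n0 by simp
    have TD: "real T * D \<le> \<gamma> * real n ^ 2"
    proof -
      have "real T * D = (\<Sum>i<k. real (t i) * D)" unfolding T_def by (simp add: sum_distrib_right)
      also have "\<dots> \<le> (\<Sum>i<k. real (card (Gs i)))" by (rule sum_mono) (rule tD)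
      finally show ?thesis using sumb by linarith
    qed
    have Tle: "real T * \<alpha> \<le> \<gamma> * real n"
    proof -
      have "(real T * \<alpha>) * real n \<le> (\<gamma> * real n) * real n"
        using TD unfolding D_def by (simp add: power2_eq_square algebra_simps)
      then show ?thesis using n0 by simp
    qed
    define K where "K = 2*T+1"
    have K1: "1 \<le> K" unfolding K_def by simp
    have KD: "real ((2*k+2)*K) \<le> D"
    proof -
      have T1: "1 \<le> real T" using False by simp
      have "real ((2*k+2)*K) = (2 * real k + 2) * (2 * real T + 1)" unfolding K_def by (simp add: algebra_simps)
      also have "\<dots> \<le> (2 * real k + 2) * (3 * real T)" using T1 by (intro mult_left_mono) auto
      also have "\<dots> = 6 * (real k + 1) * real T" by (simp add: algebra_simps)
      finally have h1: "real ((2*k+2)*K) \<le> 6 * (real k + 1) * real T" .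
      have "6 * (real k + 1) * \<gamma> \<le> \<alpha>^2" using gsmall by (simp add: field_simps)
      then have "6 * (real k + 1) * \<gamma> * real n \<le> \<alpha>^2 * real n" by (simp add: mult_right_mono)
      moreover have "6 * (real k + 1) * (real T * \<alpha>) \<le> 6 * (real k + 1) * (\<gamma> * real n)"
        using Tle by (intro mult_left_mono) auto
      ultimately have "(6 * (real k + 1) * real T) * \<alpha> \<le> (\<alpha> * real n) * \<alpha>"
        by (simp add: power2_eq_square algebra_simps)
      then have "6 * (real k + 1) * real T \<le> \<alpha> * real n" using a0 by (simp add: mult.commute)
      then show ?thesis using h1 unfolding D_def by linarith
    qed
    define Dn where "Dn = nat (floor D)"
    have DnD: "real Dn \<le> D" unfolding Dn_def using D0 by simp
    have degn: "\<And>i v. i < k \<Longrightarrow> outdeg (Gs i) v \<le> Dn \<and> indeg (Gs i) v \<le> Dn"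
      using degb unfolding Dn_def D_def by (auto intro: le_nat_floor)
    define A where "A i = {v. K \<le> outdeg (Gs i) v}" for i
    define B where "B i = {v. K \<le> indeg (Gs i) v}" for i
    have finA: "finite (A i)" "finite (B i)" if i: "i < k" for i
    proof -
      have "A i \<subseteq> {..<n}"
      proof
        fix v assume "v \<in> A i"
        then have "0 < card {u. (v,u) \<in> Gs i}" using K1 unfolding A_def outdeg_def by simp
        then obtain u where "(v,u) \<in> Gs i" by (metis (no_types, lifting) card.empty empty_Collect_eq less_irrefl)
        then show "v \<in> {..<n}" using subE i Eb by blast
      qed
      then show "finite (A i)" using finite_subset by blast
      have "B i \<subseteq> {..<n}"
      proof
        fix v assume "v \<in> B i"
        then have "0 < card {u. (u,v) \<in> Gs i}" using K1 unfolding B_def indeg_def by simp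
        then obtain u where "(u,v) \<in> Gs i" by (metis (no_types, lifting) card.empty empty_Collect_eq less_irrefl)
        then show "v \<in> {..<n}" using subE i Eb by blast
      qed
      then show "finite (B i)" using finite_subset by blast
    qed
    define Lt where "Lt i = {(u,v). (u,v) \<in> Gs i \<and> u \<notin> A i \<and> v \<notin> B i}" for i
    have finLt: "\<And>i. i < k \<Longrightarrow> finite (Lt i)"
      using finG unfolding Lt_def by (auto intro: finite_subset[of _ "Gs _"])
    have cardG: "card (Gs i) \<le> card (Lt i) + card (A i) * Dn + card (B i) * Dn" if i: "i < k" for i
    proof -
      have cover: "Gs i \<subseteq> Lt i \<union> Sigma (A i) (\<lambda>u. {v. (u,v) \<in> Gs i}) \<union> {(u,v). (u,v) \<in> Gs i \<and> v \<in> B i}"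
        unfolding Lt_def by auto
      have fin3: "finite (Lt i \<union> Sigma (A i) (\<lambda>u. {v. (u,v) \<in> Gs i}) \<union> {(u,v). (u,v) \<in> Gs i \<and> v \<in> B i})"
      proof -
        have "Lt i \<union> Sigma (A i) (\<lambda>u. {v. (u,v) \<in> Gs i}) \<union> {(u,v). (u,v) \<in> Gs i \<and> v \<in> B i} \<subseteq> Gs i"
          unfolding Lt_def by auto
        then show ?thesis using finG[OF i] finite_subset by blast
      qed
      have "card (Gs i) \<le> card (Lt i \<union> Sigma (A i) (\<lambda>u. {v. (u,v) \<in> Gs i}) \<union> {(u,v). (u,v) \<in> Gs i \<and> v \<in> B i})"
        by (rule card_mono[OF fin3 cover])
      also have "\<dots> \<le> card (Lt i) + card (Sigma (A i) (\<lambda>u. {v. (u,v) \<in> Gs i})) + card {(u,v). (u,v) \<in> Gs i \<and> v \<in> B i}"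
        by (meson add_mono_thms_linordered_semiring(3) card_Un_le order_trans)
      also have "\<dots> \<le> card (Lt i) + card (A i) * Dn + card (B i) * Dn"
        using card_out_block[OF finG[OF i] finA(1)[OF i], of Dn] card_in_block[OF finG[OF i] finA(2)[OF i], of Dn]
          degn[OF i] unfolding outdeg_def indeg_def by fastforce
      finally show ?thesis .
    qed
    have "\<forall>i. \<exists>XY. i < k \<longrightarrow> (fst XY \<subseteq> A i \<and> snd XY \<subseteq> B i \<and> card (fst XY) + card (snd XY) \<le> t i
              \<and> (card (fst XY) + card (snd XY) = t i \<or> (fst XY = A i \<and> snd XY = B i)))"
    proof
      fix i show "\<exists>XY. i < k \<longrightarrow> (fst XY \<subseteq> A i \<and> snd XY \<subseteq> B i \<and> card (fst XY) + card (snd XY) \<le> t i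
              \<and> (card (fst XY) + card (snd XY) = t i \<or> (fst XY = A i \<and> snd XY = B i)))"
      proof (cases "i < k")
        case True
        then obtain X Y where "X \<subseteq> A i \<and> Y \<subseteq> B i \<and> card X + card Y \<le> t i \<and> (card X + card Y = t i \<or> (X = A i \<and> Y = B i))"
          using choose_AB[OF finA[OF True], of "t i"] by blast
        then show ?thesis by (intro exI[of _ "(X,Y)"]) simp
      qed simp
    qed
    then obtain g where g: "\<forall>i. i < k \<longrightarrow> (fst (g i) \<subseteq> A i \<and> snd (g i) \<subseteq> B i \<and> card (fst (g i)) + card (snd (g i)) \<le> t i
              \<and> (card (fst (g i)) + card (snd (g i)) = t i \<or> (fst (g i) = A i \<and> snd (g i) = B i)))"
      by (metis choice)
    define AA where "AA i = fst (g i)" for i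
    define BB where "BB i = snd (g i)" for i
    have AB: "\<And>i. i < k \<Longrightarrow> AA i \<subseteq> A i \<and> BB i \<subseteq> B i \<and> card (AA i) + card (BB i) \<le> t i
              \<and> (card (AA i) + card (BB i) = t i \<or> (AA i = A i \<and> BB i = B i))"
      using g unfolding AA_def BB_def by blast
    define s where "s i = t i - (card (AA i) + card (BB i))" for i
    have big: "\<forall>i<k. s i * ((2*k+2)*K) \<le> card (Lt i)"
    proof (intro allI impI)
      fix i assume i: "i < k"
      show "s i * ((2*k+2)*K) \<le> card (Lt i)"
      proof (cases "s i = 0")
        case True then show ?thesis by simp
      next
        case False
        then have eq: "AA i = A i" "BB i = B i" using AB[OF i] unfolding s_def by auto
        have le: "card (A i) + card (B i) \<le> t i" using AB[OF i] eq by simp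
        have "real (s i) * D = real (t i) * D - real (card (A i) + card (B i)) * D"
          unfolding s_def eq using le by (simp add: of_nat_diff left_diff_distrib)
        also have "\<dots> \<le> real (card (Gs i)) - real (card (A i) + card (B i)) * real Dn"
        proof -
          have "real (card (A i) + card (B i)) * real Dn \<le> real (card (A i) + card (B i)) * D"
            using DnD by (intro mult_left_mono) auto
          then show ?thesis using tD[of i] by linarith
        qed
        also have "\<dots> \<le> real (card (Lt i))" proof -
          have "real (card (Gs i)) \<le> real (card (Lt i) + card (A i) * Dn + card (B i) * Dn)"
            using cardG[OF i] by (simp only: of_nat_le_iff)
          then show ?thesis by (simp add: algebra_simps)
        qed
        finally have h: "real (s i) * D \<le> real (card (Lt i))" .
        have "real (s i * ((2*k+2)*K)) = real (s i) * real ((2*k+2)*K)" by simp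
        also have "\<dots> \<le> real (s i) * D" using KD by (intro mult_left_mono) auto
        finally show ?thesis using h by linarith
      qed
    qed
    have loopl: "\<forall>i<k. \<forall>u v. (u,v) \<in> Lt i \<longrightarrow> u \<noteq> v" using subE Eb unfolding Lt_def by blast
    have outd: "\<forall>i<k. \<forall>u. card {v. (u,v) \<in> Lt i} \<le> K - 1"
    proof (intro allI impI)
      fix i u assume i: "i < k"
      show "card {v. (u,v) \<in> Lt i} \<le> K - 1"
      proof (cases "u \<in> A i")
        case True then show ?thesis unfolding Lt_def by simp
      next
        case False
        then have "card {v. (u,v) \<in> Gs i} < K" unfolding A_def outdeg_def by simp
        moreover have "card {v. (u,v) \<in> Lt i} \<le> card {v. (u,v) \<in> Gs i}"
        proof (rule card_mono)
          show "finite {v. (u,v) \<in> Gs i}"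
            by (rule finite_subset[of _ "snd ` Gs i"]) (use finG[OF i] in force)+
        qed (auto simp: Lt_def)
        ultimately show ?thesis by linarith
      qed
    qed
    have ind: "\<forall>i<k. \<forall>v. card {u. (u,v) \<in> Lt i} \<le> K - 1"
    proof (intro allI impI)
      fix i v assume i: "i < k"
      show "card {u. (u,v) \<in> Lt i} \<le> K - 1"
      proof (cases "v \<in> B i")
        case True then show ?thesis unfolding Lt_def by simp
      next
        case False
        then have "card {u. (u,v) \<in> Gs i} < K" unfolding B_def indeg_def by simp
        moreover have "card {u. (u,v) \<in> Lt i} \<le> card {u. (u,v) \<in> Gs i}"
        proof (rule card_mono)
          show "finite {u. (u,v) \<in> Gs i}"
            by (rule finite_subset[of _ "fst ` Gs i"]) (use finG[OF i] in force)+
        qed (auto simp: Lt_def)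
        ultimately show ?thesis by linarith
      qed
    qed
    obtain P where P: "\<forall>i<k. P i \<subseteq> Lt i \<and> card (P i) = s i \<and> ouniq (P i) \<and> iuniq (P i)"
      and acP: "acyclic (\<Union>i<k. P i)"
      using light_phase[of k Lt K s, OF _ loopl outd ind K1 big] finLt by blast
    have Psub: "\<And>i. i < k \<Longrightarrow> P i \<subseteq> Lt i" and cP: "\<And>i. i < k \<Longrightarrow> card (P i) = s i"
      and oP: "\<And>i. i < k \<Longrightarrow> ouniq (P i)" and iP: "\<And>i. i < k \<Longrightarrow> iuniq (P i)" using P by auto
    have finP: "\<And>i. i < k \<Longrightarrow> finite (P i)" using Psub finLt finite_subset by blast
    define L where "L = (\<Union>i<k. P i)"
    have finL: "finite L" unfolding L_def using finP by auto
    have PL: "\<And>i. i < k \<Longrightarrow> P i \<subseteq> L" unfolding L_def by auto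
    have finAA: "\<And>i. i < k \<Longrightarrow> finite (AA i) \<and> finite (BB i)"
      using AB finA finite_subset by metis
    define Ro where "Ro = (\<Union>i<k. {i} \<times> (AA i \<times> {True} \<union> BB i \<times> {False}))"
    define q where "q r = fst (snd r)" for r :: "nat \<times> nat \<times> bool"
    define Z where "Z = q ` Ro"
    define Fb where "Fb = Field L \<union> Z"
    define C where "C r = (if snd (snd r) then {v. (q r, v) \<in> Gs (fst r)} else {u. (u, q r) \<in> Gs (fst r)}) - Fb"
      for r :: "nat \<times> nat \<times> bool"
    have finRo: "finite Ro" unfolding Ro_def using finAA by auto
    have cRi: "card (AA i \<times> {True} \<union> BB i \<times> {False}) = card (AA i) + card (BB i)" if i: "i < k" for i
    proof -
      have "card (AA i \<times> {True} \<union> BB i \<times> {False}) = card (AA i \<times> {True}) + card (BB i \<times> {False})"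
        by (rule card_Un_disjoint) (use finAA[OF i] in auto)
      then show ?thesis by (simp add: card_cartesian_product)
    qed
    have cRo: "card Ro \<le> (\<Sum>i<k. card (AA i) + card (BB i))"
    proof -
      have "card Ro \<le> (\<Sum>i<k. card ({i} \<times> (AA i \<times> {True} \<union> BB i \<times> {False})))"
        unfolding Ro_def by (rule card_UN_le) simp
      also have "\<dots> = (\<Sum>i<k. card (AA i) + card (BB i))"
        by (rule sum.cong) (auto simp: card_cartesian_product_singleton cRi)
      finally show ?thesis .
    qed
    have sumT: "(\<Sum>i<k. s i) + (\<Sum>i<k. card (AA i) + card (BB i)) = T"
    proof -
      have "(\<Sum>i<k. s i) + (\<Sum>i<k. card (AA i) + card (BB i)) = (\<Sum>i<k. s i + (card (AA i) + card (BB i)))"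
        by (simp add: sum.distrib)
      also have "\<dots> = (\<Sum>i<k. t i)" by (rule sum.cong) (use AB in \<open>auto simp: s_def\<close>)
      finally show ?thesis unfolding T_def .
    qed
    have cL: "card L \<le> (\<Sum>i<k. s i)"
    proof -
      have "card L \<le> (\<Sum>i<k. card (P i))" unfolding L_def by (rule card_UN_le) simp
      also have "\<dots> = (\<Sum>i<k. s i)" by (rule sum.cong) (auto simp: cP)
      finally show ?thesis .
    qed
    have finFb: "finite Fb" unfolding Fb_def Z_def using finL finRo by (simp add: finite_Field)
    have cFb: "card Fb \<le> 2 * (\<Sum>i<k. s i) + card Ro"
    proof -
      have "card Fb \<le> card (Field L) + card Z" unfolding Fb_def by (rule card_Un_le)
      moreover have "card (Field L) \<le> 2 * card L" by (rule card_Field_le[OF finL])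
      moreover have "card Z \<le> card Ro" unfolding Z_def by (rule card_image_le[OF finRo])
      ultimately show ?thesis using cL by linarith
    qed
    have Rmem: "\<And>r. r \<in> Ro \<Longrightarrow> fst r < k \<and> (snd (snd r) \<longrightarrow> q r \<in> AA (fst r)) \<and> (\<not> snd (snd r) \<longrightarrow> q r \<in> BB (fst r))"
      unfolding Ro_def q_def by auto
    have Cok: "\<forall>r\<in>Ro. finite (C r) \<and> card Ro \<le> card (C r)"
    proof
      fix r assume r: "r \<in> Ro"
      define i where "i = fst r"
      have i: "i < k" using Rmem[OF r] unfolding i_def by simp
      define S where "S = (if snd (snd r) then {v. (q r, v) \<in> Gs i} else {u. (u, q r) \<in> Gs i})"
      have CS: "C r = S - Fb" unfolding C_def S_def i_def by simp
      have finS: "finite S"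
      proof -
        have "S \<subseteq> fst ` Gs i \<union> snd ` Gs i" unfolding S_def by (auto split: if_splits; force)
        then show ?thesis using finG[OF i] finite_subset by blast
      qed
      have KS: "K \<le> card S"
      proof (cases "snd (snd r)")
        case True
        then have "q r \<in> A i" using Rmem[OF r] AB[OF i] unfolding i_def by blast
        then show ?thesis using True unfolding S_def A_def outdeg_def by simp
      next
        case False
        then have "q r \<in> B i" using Rmem[OF r] AB[OF i] unfolding i_def by blast
        then show ?thesis using False unfolding S_def B_def indeg_def by simp
      qed
      have "card S - card Fb \<le> card (C r)" unfolding CS by (rule diff_card_le_card_Diff[OF finFb])
      moreover have "card Ro + card Fb \<le> K" unfolding K_def using cFb cRo sumT by linarith
      ultimately have "card Ro \<le> card (C r)" using KS by linarith
      then show "finite (C r) \<and> card Ro \<le> card (C r)" unfolding CS using finS by simp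
    qed
    obtain f where finj: "inj_on f Ro" and fC: "\<forall>r\<in>Ro. f r \<in> C r"
      using sdr[OF finRo Cok] by blast
    have fL: "\<And>r. r \<in> Ro \<Longrightarrow> f r \<notin> Field L" and fZ: "\<And>r. r \<in> Ro \<Longrightarrow> f r \<notin> Z"
      using fC unfolding C_def Fb_def by auto
    have qZ: "\<And>r. r \<in> Ro \<Longrightarrow> q r \<in> Z" unfolding Z_def by simp
    define ed where "ed r = (if snd (snd r) then (q r, f r) else (f r, q r))" for r
    have edG: "\<And>r. r \<in> Ro \<Longrightarrow> ed r \<in> Gs (fst r)"
      using fC unfolding ed_def C_def by (auto split: if_splits)
    have acR: "acyclic (L \<union> ed ` Ro)"
    proof (rule acyc_pendant[OF finRo _ finj])
      show "acyclic L" using acP unfolding L_def .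
      show "\<forall>r\<in>Ro. ed r = (f r, q r) \<or> ed r = (q r, f r)" unfolding ed_def by auto
      show "\<forall>r\<in>Ro. f r \<noteq> q r" using fZ qZ by metis
      show "\<forall>r\<in>Ro. f r \<notin> Field L" using fL by blast
      show "\<forall>r\<in>Ro. f r \<notin> q ` Ro" using fZ unfolding Z_def by blast
    qed
    define Qs where "Qs i = P i \<union> ed ` {r \<in> Ro. fst r = i}" for i
    have Ri: "{r \<in> Ro. fst r = i} = {i} \<times> (AA i \<times> {True} \<union> BB i \<times> {False})" if "i < k" for i
      unfolding Ro_def using that by auto
    have edinj: "inj_on ed Ro"
    proof (rule inj_onI)
      fix r1 r2 assume r1: "r1 \<in> Ro" and r2: "r2 \<in> Ro" and e: "ed r1 = ed r2"
      show "r1 = r2"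
      proof (cases "snd (snd r1)"; cases "snd (snd r2)")
        assume "snd (snd r1)" "snd (snd r2)"
        then have "f r1 = f r2" using e unfolding ed_def by simp
        then show ?thesis using finj r1 r2 by (meson inj_onD)
      next
        assume "snd (snd r1)" "\<not> snd (snd r2)"
        then have "q r1 = f r2" using e unfolding ed_def by simp
        then show ?thesis using fZ[OF r2] qZ[OF r1] by simp
      next
        assume "\<not> snd (snd r1)" "snd (snd r2)"
        then have "f r1 = q r2" using e unfolding ed_def by simp
        then show ?thesis using fZ[OF r1] qZ[OF r2] by simp
      next
        assume "\<not> snd (snd r1)" "\<not> snd (snd r2)"
        then have "f r1 = f r2" using e unfolding ed_def by simp
        then show ?thesis using finj r1 r2 by (meson inj_onD)
      qed
    qed
    have Pprop: "\<And>i x y. i < k \<Longrightarrow> (x,y) \<in> P i \<Longrightarrow> x \<notin> A i \<and> y \<notin> B i \<and> x \<in> Field L \<and> y \<in> Field L"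
    proof -
      fix i x y assume i: "i < k" and xy: "(x,y) \<in> P i"
      have "(x,y) \<in> L" using PL[OF i] xy by blast
      then have "x \<in> Field L" "y \<in> Field L" by (auto intro: FieldI1 FieldI2)
      moreover have "(x,y) \<in> Lt i" using Psub[OF i] xy by blast
      ultimately show "x \<notin> A i \<and> y \<notin> B i \<and> x \<in> Field L \<and> y \<in> Field L" unfolding Lt_def by auto
    qed
    have Qcases: "\<And>i x y. (x,y) \<in> Qs i \<Longrightarrow> (x,y) \<in> P i \<or>
         (\<exists>r\<in>Ro. fst r = i \<and> snd (snd r) \<and> x = q r \<and> y = f r) \<or>
         (\<exists>r\<in>Ro. fst r = i \<and> \<not> snd (snd r) \<and> x = f r \<and> y = q r)"
      unfolding Qs_def ed_def by (auto split: if_splits)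
    have req: "\<And>r1 r2. r1 \<in> Ro \<Longrightarrow> r2 \<in> Ro \<Longrightarrow> fst r1 = fst r2 \<Longrightarrow> q r1 = q r2 \<Longrightarrow>
        snd (snd r1) = snd (snd r2) \<Longrightarrow> r1 = r2"
      unfolding q_def by (simp add: prod_eq_iff)
    have AAsub: "\<And>i. i < k \<Longrightarrow> AA i \<subseteq> A i \<and> BB i \<subseteq> B i" using AB by blast
    have oQ: "ouniq (Qs i)" if i: "i < k" for i
      unfolding ouniq_def
    proof (intro allI impI, elim conjE)
      fix x y y' assume h1: "(x,y) \<in> Qs i" and h2: "(x,y') \<in> Qs i"
      show "y = y'"
        using Qcases[OF h1] Qcases[OF h2]
      proof (elim disjE bexE conjE)
        assume "(x,y) \<in> P i" "(x,y') \<in> P i" then show ?thesis using oP[OF i] unfolding ouniq_def by blast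
      next
        fix r assume "(x,y) \<in> P i" "r \<in> Ro" "fst r = i" "snd (snd r)" "x = q r"
        then show ?thesis using Pprop[OF i] Rmem AAsub[OF i] by blast
      next
        fix r assume "(x,y) \<in> P i" "r \<in> Ro" "x = f r"
        then show ?thesis using Pprop[OF i] fL by blast
      next
        fix r assume "(x,y') \<in> P i" "r \<in> Ro" "fst r = i" "snd (snd r)" "x = q r"
        then show ?thesis using Pprop[OF i] Rmem AAsub[OF i] by blast
      next
        fix r assume "(x,y') \<in> P i" "r \<in> Ro" "x = f r"
        then show ?thesis using Pprop[OF i] fL by blast
      next
        fix r1 r2 assume "r1 \<in> Ro" "fst r1 = i" "snd (snd r1)" "x = q r1" "y = f r1"
          "r2 \<in> Ro" "fst r2 = i" "snd (snd r2)" "x = q r2" "y' = f r2"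
        then show ?thesis using req by metis
      next
        fix r1 r2 assume "r1 \<in> Ro" "x = q r1" "r2 \<in> Ro" "x = f r2"
        then show ?thesis using fZ qZ by metis
      next
        fix r1 r2 assume "r1 \<in> Ro" "x = f r1" "r2 \<in> Ro" "x = q r2"
        then show ?thesis using fZ qZ by metis
      next
        fix r1 r2 assume "r1 \<in> Ro" "x = f r1" "y = q r1" "fst r1 = i" "\<not> snd (snd r1)"
          "r2 \<in> Ro" "x = f r2" "y' = q r2"
        then show ?thesis using finj by (metis inj_onD)
      qed
    qed
    have iQ: "iuniq (Qs i)" if i: "i < k" for i
      unfolding iuniq_def
    proof (intro allI impI, elim conjE)
      fix x y y' assume h1: "(y,x) \<in> Qs i" and h2: "(y',x) \<in> Qs i"
      show "y = y'"
        using Qcases[OF h1] Qcases[OF h2]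
      proof (elim disjE bexE conjE)
        assume "(y,x) \<in> P i" "(y',x) \<in> P i" then show ?thesis using iP[OF i] unfolding iuniq_def by blast
      next
        fix r assume "(y,x) \<in> P i" "r \<in> Ro" "x = f r"
        then show ?thesis using Pprop[OF i] fL by blast
      next
        fix r assume "(y,x) \<in> P i" "r \<in> Ro" "fst r = i" "\<not> snd (snd r)" "x = q r"
        then show ?thesis using Pprop[OF i] Rmem AAsub[OF i] by blast
      next
        fix r assume "(y',x) \<in> P i" "r \<in> Ro" "x = f r"
        then show ?thesis using Pprop[OF i] fL by blast
      next
        fix r assume "(y',x) \<in> P i" "r \<in> Ro" "fst r = i" "\<not> snd (snd r)" "x = q r"
        then show ?thesis using Pprop[OF i] Rmem AAsub[OF i] by blast
      next
        fix r1 r2 assume "r1 \<in> Ro" "y = q r1" "x = f r1"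
          "r2 \<in> Ro" "y' = q r2" "x = f r2"
        then show ?thesis using finj by (metis inj_onD)
      next
        fix r1 r2 assume "r1 \<in> Ro" "x = f r1" "r2 \<in> Ro" "x = q r2"
        then show ?thesis using fZ qZ by metis
      next
        fix r1 r2 assume "r1 \<in> Ro" "x = q r1" "r2 \<in> Ro" "x = f r2"
        then show ?thesis using fZ qZ by metis
      next
        fix r1 r2 assume "r1 \<in> Ro" "fst r1 = i" "\<not> snd (snd r1)" "x = q r1" "y = f r1"
          "r2 \<in> Ro" "fst r2 = i" "\<not> snd (snd r2)" "x = q r2" "y' = f r2"
        then show ?thesis using req by metis
      qed
    qed
    have UQ: "(\<Union>i<k. Qs i) \<subseteq> L \<union> ed ` Ro" unfolding Qs_def L_def by auto
    have acQ: "acyclic (\<Union>i<k. Qs i)" using acyclic_subset[OF acR UQ] .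
    have cardQ: "card (Qs i) = t i" if i: "i < k" for i
    proof -
      have disj: "P i \<inter> ed ` {r \<in> Ro. fst r = i} = {}"
      proof (rule ccontr)
        assume "P i \<inter> ed ` {r \<in> Ro. fst r = i} \<noteq> {}"
        then obtain r where r: "r \<in> Ro" and e: "ed r \<in> P i" by blast
        obtain x y where xy2: "ed r = (x,y)" by (cases "ed r")
        have xy: "(x,y) \<in> P i" "ed r = (x,y)" using e xy2 by auto
        have "f r = x \<or> f r = y" using xy(2) unfolding ed_def by (auto split: if_splits)
        then show False using Pprop[OF i xy(1)] fL[OF r] by auto
      qed
      have finE': "finite (ed ` {r \<in> Ro. fst r = i})" using finRo by simp
      have "card (Qs i) = card (P i) + card (ed ` {r \<in> Ro. fst r = i})"
        unfolding Qs_def by (rule card_Un_disjoint[OF finP[OF i] finE' disj])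
      also have "card (ed ` {r \<in> Ro. fst r = i}) = card {r \<in> Ro. fst r = i}"
        by (rule card_image) (rule inj_on_subset[OF edinj], auto)
      also have "\<dots> = card (AA i) + card (BB i)"
        unfolding Ri[OF i] card_cartesian_product_singleton using cRi[OF i] .
      finally show ?thesis using cP[OF i] AB[OF i] unfolding s_def by simp
    qed
    show ?thesis
    proof (intro exI[of _ Qs] conjI allI impI)
      fix i assume i: "i < k"
      show "Qs i \<subseteq> Gs i"
        unfolding Qs_def using Psub[OF i] edG unfolding Lt_def by auto
      have "finite (Qs i)" using cardQ[OF i] finP[OF i] finRo unfolding Qs_def by simp
      moreover have "acyclic (Qs i)" using acyclic_subset[OF acQ] i by blast
      ultimately show "path_system (Qs i)" using oQ[OF i] iQ[OF i]
        unfolding path_system_def ouniq_def iuniq_def by blast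
      show "of_int (floor (real (card (Gs i)) / (\<alpha> * real n))) \<le> real (card (Qs i))"
        using cardQ[OF i] tfl[of i] unfolding D_def by simp
    next
      show "acyclic (\<Union>i<k. Qs i)" by (rule acQ)
    qed
  qed
qed


theorem lemma4p3:
  fixes k :: nat and \<alpha> :: real
  assumes "0 < \<alpha>" and "\<alpha> < 1"
  shows "\<exists>\<gamma>0 > (0::real). \<forall>\<gamma>. 0 < \<gamma> \<and> \<gamma> \<le> \<gamma>0 \<longrightarrow>
    (\<forall>(n::nat) (E :: (nat \<times> nat) set) (Gs :: nat \<Rightarrow> (nat \<times> nat) set).
       digraph {..<n} E \<and>
       (\<forall>i<k. Gs i \<subseteq> E) \<and>
       (\<forall>i<k. \<forall>j<k. i \<noteq> j \<longrightarrow> Gs i \<inter> Gs j = {}) \<and>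
       (\<Sum>i<k. real (card (Gs i))) \<le> \<gamma> * real n ^ 2 \<and>
       (\<forall>i<k. \<forall>v. real (outdeg (Gs i) v) \<le> \<alpha> * real n \<and> real (indeg (Gs i) v) \<le> \<alpha> * real n)
       \<longrightarrow> (\<exists>Qs :: nat \<Rightarrow> (nat \<times> nat) set.
             (\<forall>i<k. Qs i \<subseteq> Gs i \<and> path_system (Qs i)) \<and>
             acyclic (\<Union>i<k. Qs i) \<and>
             (\<forall>i<k. of_int \<lfloor>real (card (Gs i)) / (\<alpha> * real n)\<rfloor> \<le> real (card (Qs i)))))"
proof (intro exI[of _ "\<alpha>^2 / (6 * (real k + 1))"] conjI allI impI)
  show "0 < \<alpha>^2 / (6 * (real k + 1))" using assms(1) by simp
next
  fix \<gamma> :: real and n :: nat and E :: "(nat \<times> nat) set" and Gs :: "nat \<Rightarrow> (nat \<times> nat) set"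
  assume g: "0 < \<gamma> \<and> \<gamma> \<le> \<alpha>^2 / (6 * (real k + 1))"
  assume h: "digraph {..<n} E \<and>
       (\<forall>i<k. Gs i \<subseteq> E) \<and>
       (\<forall>i<k. \<forall>j<k. i \<noteq> j \<longrightarrow> Gs i \<inter> Gs j = {}) \<and>
       (\<Sum>i<k. real (card (Gs i))) \<le> \<gamma> * real n ^ 2 \<and>
       (\<forall>i<k. \<forall>v. real (outdeg (Gs i) v) \<le> \<alpha> * real n \<and> real (indeg (Gs i) v) \<le> \<alpha> * real n)"
  show "\<exists>Qs :: nat \<Rightarrow> (nat \<times> nat) set.
             (\<forall>i<k. Qs i \<subseteq> Gs i \<and> path_system (Qs i)) \<and>
             acyclic (\<Union>i<k. Qs i) \<and>
             (\<forall>i<k. of_int \<lfloor>real (card (Gs i)) / (\<alpha> * real n)\<rfloor> \<le> real (card (Qs i)))"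
    using core[of \<alpha> \<gamma> k n E Gs] assms(1) g h by blast
qed

end
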